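(* Let $p$ be a prime. There is exactly one numerical semigroup $S$ of genus $p+1$ that is both reflective and symmetric, namely $S=\langle 2,7\rangle$ if $p=2$, and $S=\langle \{p\}\cup\{p+2,p+3,\dots,2p-1\}\rangle$ if $p$ is odd.
   Context: A numerical semigroup is a submonoid $S$ of $(\mathbb{N}_0,+)$ with finite complement; its genus is the number of elements of $\mathbb{N}_0\setminus S$ and $\mathrm{F}(S)$ is its largest gap. $\langle A\rangle$ denotes the set of finite $\mathbb{N}_0$-linear combinations of elements of $A$. $S$ is symmetric if for every $z\in\mathbb{Z}$ exactly one of $z$ and $\mathrm{F}(S)-z$ lies in $S$. A numerical semigroup $S$ of genus $g\ge1$ is called reflective if for every $z\in\{0,1,\dots,g-1\}$ exactly one of $z$ and $z+g$ belongs to $S$. *)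

theory Defs
  imports "HOL-Computational_Algebra.Primes"
begin

inductive_set generated :: "nat set \<Rightarrow> nat set" for A :: "nat set" where
  gen_zero: "0 \<in> generated A"
| gen_add: "a \<in> A \<Longrightarrow> s \<in> generated A \<Longrightarrow> a + s \<in> generated A"

definition numerical_semigroup :: "nat set \<Rightarrow> bool" where
  "numerical_semigroup S \<longleftrightarrow> 0 \<in> S \<and> (\<forall>x\<in>S. \<forall>y\<in>S. x + y \<in> S) \<and> finite (UNIV - S)"

definition genus :: "nat set \<Rightarrow> nat" where
  "genus S = card (UNIV - S)"

text \<open>Largest gap; by the usual convention F(N_0) = -1.\<close>
definition frobenius :: "nat set \<Rightarrow> int" where
  "frobenius S = (if UNIV - S = {} then -1 else int (Max (UNIV - S)))"

text \<open>z ranges over the integers; negative integers are never in S.\<close>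
definition symmetric_ns :: "nat set \<Rightarrow> bool" where
  "symmetric_ns S \<longleftrightarrow>
     (\<forall>z::int. (z \<ge> 0 \<and> nat z \<in> S) \<noteq> (frobenius S - z \<ge> 0 \<and> nat (frobenius S - z) \<in> S))"

definition reflective :: "nat set \<Rightarrow> bool" where
  "reflective S \<longleftrightarrow> genus S \<ge> 1 \<and>
     (\<forall>z < genus S. (z \<in> S) \<noteq> (z + genus S \<in> S))"

end

theory Submission
  imports Defs
begin

definition TT :: "nat \<Rightarrow> nat set" where
  "TT p = {x. x = 0 \<or> x = p \<or> (p+2 \<le> x \<and> x \<le> 2*p) \<or> 2*p+2 \<le> x}"

lemma gen_base: "a \<in> A \<Longrightarrow> a \<in> generated A"
  using gen_add[of a A 0] gen_zero by simp

lemma gen_plus: "s \<in> generated A \<Longrightarrow> t \<in> generated A \<Longrightarrow> s + t \<in> generated A"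
  by (induction s rule: generated.induct) (auto simp: add.assoc intro: gen_add)

lemma gen_sub: "(\<And>a. a\<in>A \<Longrightarrow> a \<in> B) \<Longrightarrow> 0\<in>B \<Longrightarrow> (\<And>x y. x\<in>B \<Longrightarrow> y\<in>B \<Longrightarrow> x+y\<in>B)
   \<Longrightarrow> generated A \<subseteq> B"
proof
  fix x assume a: "\<And>a. a\<in>A \<Longrightarrow> a \<in> B" "0\<in>B" "\<And>x y. x\<in>B \<Longrightarrow> y\<in>B \<Longrightarrow> x+y\<in>B"
    and "x \<in> generated A"
  from \<open>x \<in> generated A\<close> show "x \<in> B" by (induction x rule: generated.induct) (auto intro: a)
qed

lemma TT_add: "p \<ge> 2 \<Longrightarrow> x\<in>TT p \<Longrightarrow> y\<in>TT p \<Longrightarrow> x+y \<in> TT p"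
  unfolding TT_def by auto

lemma gen_eq:
  assumes "prime p"
  shows "(if p = 2 then generated {2, 7} else generated ({p} \<union> {p + 2 .. 2 * p - 1})) = TT p"
proof -
  have p2: "p \<ge> 2" using assms prime_ge_2_nat by blast
  define G where "G = (if p = 2 then {2, 7} else ({p} \<union> {p + 2 .. 2 * p - 1}))"
  have l: "(if p = 2 then generated {2, 7} else generated ({p} \<union> {p + 2 .. 2 * p - 1})) = generated G"
    unfolding G_def by simp
  have "generated G \<subseteq> TT p"
    by (rule gen_sub) (use p2 in \<open>auto simp: G_def TT_def split: if_splits intro: TT_add\<close>)
  moreover have "TT p \<subseteq> generated G"
  proof
    fix x assume "x \<in> TT p"
    then show "x \<in> generated G"
    proof (induction x rule: less_induct)
      case (less x)
      show ?case
      proof (cases "p = 2")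
        case True
        then have g: "G = {2,7}" by (simp add: G_def)
        have g2: "2 \<in> generated G" and g7: "7 \<in> generated G" using g gen_base by auto
        show ?thesis
        proof (cases "x = 0 \<or> x = 2 \<or> x = 7")
          case True then show ?thesis using g2 g7 gen_zero by auto
        next
          case False
          then have "x - 2 \<in> TT p" "x - 2 < x" using less.prems True by (auto simp: TT_def)
          then have "x - 2 \<in> generated G" using less.IH by blast
          then have "2 + (x - 2) \<in> generated G" using gen_plus g2 by blast
          moreover have "2 + (x - 2) = x" using False less.prems True by (auto simp: TT_def)
          ultimately show ?thesis by simp
        qed
      next
        case False
        then have p3: "p \<ge> 3" using p2 by auto
        have gG: "\<And>a. a \<in> G \<Longrightarrow> a \<in> generated G" using gen_base by blast
        have gp: "p \<in> generated G" using gG False by (auto simp: G_def)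
        show ?thesis
        proof (cases "x = 0 \<or> x = p \<or> (p+2 \<le> x \<and> x \<le> 2*p-1)")
          case True then show ?thesis using gG gen_zero False by (auto simp: G_def)
        next
          case nc: False
          show ?thesis
          proof (cases "x = 3*p+1")
            case True
            have "p+2 \<in> G" "2*p-1 \<in> G" using False p3 by (auto simp: G_def)
            then have "p+2 \<in> generated G" "2*p-1 \<in> generated G" using gG by auto
            then have "(p+2) + (2*p-1) \<in> generated G" by (rule gen_plus)
            moreover have "(p+2) + (2*p-1) = x" using True p3 by simp
            ultimately show ?thesis by simp
          next
            case False
            then have "x - p \<in> TT p" "x - p < x" using less.prems nc p3 by (auto simp: TT_def)
            then have "x - p \<in> generated G" using less.IH by blast
            then have "p + (x - p) \<in> generated G" using gen_plus gp by blast
            moreover have "p + (x - p) = x" using nc less.prems p3 by (auto simp: TT_def)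
            ultimately show ?thesis by simp
          qed
        qed
      qed
    qed
  qed
  ultimately show ?thesis using l by blast
qed


lemma TT_C: "p \<ge> 2 \<Longrightarrow> UNIV - TT p = {1..<p} \<union> {p+1, 2*p+1}" by (auto simp: TT_def)
lemma TT_mem: "n \<le> 2*p+1 \<Longrightarrow> p \<ge> 2 \<Longrightarrow> n \<in> TT p \<longleftrightarrow> 2*p+1-n \<notin> TT p"
  unfolding TT_def mem_Collect_eq by arith
lemma TT_R: "p \<ge> 2 \<Longrightarrow> z < p+1 \<Longrightarrow> z \<in> TT p \<longleftrightarrow> z + (p+1) \<notin> TT p"
  unfolding TT_def mem_Collect_eq by arith
lemma TT_big: "n > 2*p+1 \<Longrightarrow> n \<in> TT p" by (simp add: TT_def)

lemma TT_props:
  assumes p2: "p \<ge> 2"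
  shows "numerical_semigroup (TT p) \<and> genus (TT p) = p + 1 \<and> reflective (TT p) \<and> symmetric_ns (TT p)"
proof -
  have C: "UNIV - TT p = {1..<p} \<union> {p+1, 2*p+1}" using TT_C[OF p2] .
  have ns: "numerical_semigroup (TT p)"
    unfolding numerical_semigroup_def
  proof (intro conjI ballI)
    show "0 \<in> TT p" by (simp add: TT_def)
    show "finite (UNIV - TT p)" unfolding C by simp
  qed (rule TT_add[OF p2])
  have "card ({1..<p} \<union> {p+1, 2*p+1}) = card {1..<p} + card {p+1, 2*p+1}"
    by (rule card_Un_disjoint) auto
  also have "\<dots> = p + 1" using p2 by simp
  finally have g: "genus (TT p) = p + 1" unfolding genus_def C .
  have M: "Max (UNIV - TT p) = 2*p+1" unfolding C
    by (rule Max_eqI) auto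
  have F: "frobenius (TT p) = 2*int p+1" unfolding frobenius_def M using C by auto
  have r: "reflective (TT p)" unfolding reflective_def g using TT_R[OF p2] by simp
  have s: "symmetric_ns (TT p)" unfolding symmetric_ns_def F
  proof
    fix z :: int
    show "(0 \<le> z \<and> nat z \<in> TT p) \<noteq> (0 \<le> 2 * int p + 1 - z \<and> nat (2 * int p + 1 - z) \<in> TT p)"
    proof (cases "z < 0")
      case True
      then have "nat (2 * int p + 1 - z) > 2*p+1" by linarith
      then show ?thesis using True TT_big by auto
    next
      case f1: False
      show ?thesis
      proof (cases "z > 2*int p + 1")
        case True
        then have "nat z > 2*p+1" by linarith
        then show ?thesis using True TT_big by auto
      next
        case False
        define n where "n = nat z"
        have n: "z = int n" "n \<le> 2*p+1" using f1 False n_def by auto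
        have "nat (2 * int p + 1 - z) = 2*p+1-n" using n by auto
        then show ?thesis using n TT_mem[OF n(2) p2] by auto
      qed
    qed
  qed
  show ?thesis using ns g r s by blast
qed

lemma main_dir:
  assumes pr: "prime p" and ns: "numerical_semigroup S" and gS: "genus S = p+1"
    and rf: "reflective S" and sy: "symmetric_ns S"
  shows "S = TT p"
proof -
  have p2: "p \<ge> 2" using pr prime_ge_2_nat by blast
  have z: "0\<in>S" and cl: "\<And>x y. x\<in>S \<Longrightarrow> y\<in>S \<Longrightarrow> x+y \<in>S" and fin: "finite (UNIV - S)"
    using ns unfolding numerical_semigroup_def by auto
  have ne: "UNIV - S \<noteq> {}"
  proof
    assume "UNIV - S = {}"
    then have "genus S = 0" unfolding genus_def by (simp only: card.empty)
    with gS show False by simp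
  qed
  define N where "N = Max (UNIV - S)"
  have fr: "frobenius S = int N" using ne by (simp add: frobenius_def N_def)
  have gap_le: "x \<le> N" if "x \<notin> S" for x
    unfolding N_def by (rule Max_ge[OF fin]) (use that in simp)
  have symm: "(z \<in> S) \<longleftrightarrow> (N - z \<notin> S)" if "z \<le> N" for z
  proof -
    have e: "int N - int z = int (N - z)" using that by simp
    have "(int z \<ge> 0 \<and> nat (int z) \<in> S) \<noteq> (int N - int z \<ge> 0 \<and> nat (int N - int z) \<in> S)"
      using sy unfolding symmetric_ns_def fr by (rule spec)
    then have "(nat (int z) \<in> S) \<noteq> (nat (int (N - z)) \<in> S)" unfolding e by simp
    then have "(z \<in> S) \<noteq> (N - z \<in> S)" unfolding nat_int .
    then show ?thesis by blast
  qed
  have U: "{0..N} = (UNIV - S) \<union> (S \<inter> {0..N})" using gap_le by auto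
  have im: "S \<inter> {0..N} = (\<lambda>z. N - z) ` (UNIV - S)"
  proof (rule set_eqI, rule iffI)
    fix x assume x: "x \<in> S \<inter> {0..N}"
    then have "N - x \<in> UNIV - S" using symm[of x] by auto
    moreover have "x = N - (N - x)" using x by auto
    ultimately show "x \<in> (\<lambda>z. N - z) ` (UNIV - S)" by blast
  next
    fix x assume "x \<in> (\<lambda>z. N - z) ` (UNIV - S)"
    then obtain y where y: "y \<notin> S" "x = N - y" by auto
    then show "x \<in> S \<inter> {0..N}" using symm[of y] gap_le[of y] by auto
  qed
  have inj: "inj_on (\<lambda>z. N - z) (UNIV - S)"
  proof (rule inj_onI)
    fix x y assume "x \<in> UNIV - S" "y \<in> UNIV - S" "N - x = N - y"
    moreover have "x \<le> N" "y \<le> N" using gap_le \<open>x \<in> UNIV - S\<close> \<open>y \<in> UNIV - S\<close> by auto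
    ultimately show "x = y" by linarith
  qed
  have "N + 1 = card {0..N}" by simp
  also have "\<dots> = card (UNIV - S) + card (S \<inter> {0..N})"
    by (subst U, rule card_Un_disjoint) (use fin in auto)
  also have "card (S \<inter> {0..N}) = card (UNIV - S)" unfolding im using card_image[OF inj] .
  finally have NN: "N = 2*p+1" using gS unfolding genus_def by simp
  have big: "x \<in> S" if "x > 2*p+1" for x
  proof (rule ccontr)
    assume "x \<notin> S"
    then have "x \<le> N" by (rule gap_le)
    then show False using that NN by simp
  qed
  have sym2: "z\<in>S \<longleftrightarrow> 2*p+1-z \<notin> S" if "z \<le> 2*p+1" for z
  proof -
    have "z \<le> N" using NN that by simp
    from symm[OF this] show ?thesis unfolding NN .
  qed
  have refl: "z\<in>S \<longleftrightarrow> z+(p+1) \<notin> S" if "z \<le> p" for z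
  proof -
    have "\<forall>z < p+1. (z \<in> S) \<noteq> (z + (p+1) \<in> S)" using rf unfolding reflective_def gS by blast
    then have "(z \<in> S) \<noteq> (z + (p+1) \<in> S)" using that by simp
    then show ?thesis by blast
  qed
  have A_sym: "z\<in>S \<longleftrightarrow> p - z \<in> S" if "z \<le> p" for z
  proof -
    have "2*p+1-(z+(p+1)) = p - z" by simp
    then show ?thesis using refl[OF that] sym2[of "z+(p+1)"] that by auto
  qed
  have pS: "p\<in>S" using A_sym[of 0] z by simp
  have sub: "a - b \<in> S" if "a \<in>S" "b\<in>S" "b \<le> a" "a \<le> p" for a b
  proof -
    have "p - a \<in> S" using A_sym[of a] that by auto
    then have "(p-a)+b \<in> S" using cl that by blast
    moreover have "p - ((p-a)+b) = a - b" using that by simp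
    ultimately show ?thesis using A_sym[of "(p-a)+b"] that by auto
  qed
  have n1: "1 \<notin> S"
  proof
    assume "1 \<in> S"
    have "n \<in> S" for n
    proof (induction n)
      case 0 show ?case using z by simp
    next
      case (Suc n)
      have "1 + n \<in> S" using cl[OF \<open>1 \<in> S\<close> Suc.IH] .
      then show ?case by simp
    qed
    then show False using refl[of 0] z by auto
  qed
  have small: "\<not> (a\<in>S \<and> 0 < a \<and> a < p)" for a
  proof (induction a rule: less_induct)
    case (less a)
    show ?case
    proof
      assume a: "a\<in>S \<and> 0 < a \<and> a < p"
      have k: "k*a \<le> p \<Longrightarrow> p - k*a \<in> S" for k
      proof (induction k)
        case 0 then show ?case using pS by simp
      next
        case (Suc k)
        have "p - Suc k * a = (p - k*a) - a" by (simp add: diff_diff_add add.commute)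
        moreover have "(p - k*a) - a \<in> S" using Suc a sub[of "p - k*a" a] by auto
        ultimately show ?case by simp
      qed
      have "p mod a = p - (p div a)*a" by (simp add: minus_div_mult_eq_mod)
      moreover have "(p div a)*a \<le> p" by simp
      ultimately have pm: "p mod a \<in> S" using k by simp
      have "p mod a < a" using a by simp
      then have "p mod a = 0" using less.IH[of "p mod a"] pm a \<open>p mod a < a\<close> by linarith
      then have "a dvd p" by auto
      then have "a = 1 \<or> a = p" using pr prime_nat_iff by blast
      then show False using a n1 by auto
    qed
  qed
  show ?thesis
  proof (rule set_eqI)
    fix x
    consider "x = 0" | "0 < x \<and> x < p" | "x = p" | "x = p+1" | "p+2 \<le> x \<and> x \<le> 2*p"
      | "x = 2*p+1" | "x \<ge> 2*p+2" by linarith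
    then show "x \<in> S \<longleftrightarrow> x \<in> TT p"
    proof cases
      case 1 then show ?thesis using z by (simp add: TT_def)
    next
      case 2
      then have "x \<notin> S" using small[of x] by blast
      moreover have "x \<notin> TT p" using 2 by (simp add: TT_def)
      ultimately show ?thesis by blast
    next
      case 3 then show ?thesis using pS by (simp add: TT_def)
    next
      case 4
      have "0 + (p+1) \<notin> S" using refl[of 0] z by blast
      moreover have "x \<notin> TT p" using 4 p2 by (simp add: TT_def)
      ultimately show ?thesis using 4 by simp
    next
      case 5
      then have "x - (p+1) \<notin> S" using small[of "x - (p+1)"] by auto
      then have "x - (p+1) + (p+1) \<in> S" using refl[of "x - (p+1)"] 5 by auto
      then have "x \<in> S" using 5 by simp
      then show ?thesis using 5 by (auto simp: TT_def)
    next
      case 6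
      have "p + (p+1) \<notin> S" using refl[of p] pS by blast
      then have "x \<notin> S" using 6 by (simp add: mult_2)
      moreover have "x \<notin> TT p" using 6 p2 by (simp add: TT_def)
      ultimately show ?thesis by blast
    next
      case 7
      then show ?thesis using big[of x] by (simp add: TT_def)
    qed
  qed
qed

theorem mainTheorem17:
  fixes p :: nat
  assumes "prime p"
  shows "{S. numerical_semigroup S \<and> genus S = p + 1 \<and> reflective S \<and> symmetric_ns S}
         = {if p = 2 then generated {2, 7} else generated ({p} \<union> {p + 2 .. 2 * p - 1})}"
proof -
  have p2: "p \<ge> 2" using assms prime_ge_2_nat by blast
  have e: "(if p = 2 then generated {2, 7} else generated ({p} \<union> {p + 2 .. 2 * p - 1})) = TT p"
    by (rule gen_eq[OF assms])
  have "{S. numerical_semigroup S \<and> genus S = p + 1 \<and> reflective S \<and> symmetric_ns S} = {TT p}"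
  proof (rule set_eqI, rule iffI)
    fix S assume "S \<in> {S. numerical_semigroup S \<and> genus S = p + 1 \<and> reflective S \<and> symmetric_ns S}"
    then have h: "numerical_semigroup S" "genus S = p + 1" "reflective S" "symmetric_ns S" by auto
    have "S = TT p" by (rule main_dir[OF assms h])
    then show "S \<in> {TT p}" by simp
  next
    fix S assume "S \<in> {TT p}"
    then have "S = TT p" by (rule singletonD)
    then show "S \<in> {S. numerical_semigroup S \<and> genus S = p + 1 \<and> reflective S \<and> symmetric_ns S}"
      using TT_props[OF p2] by (simp only: mem_Collect_eq)
  qed
  then show ?thesis by (simp only: e)
qed

end
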